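(* Let $K$ be a field, let $e_1,\dots,e_m$ be a basis of $K^m$, and let $T_1,\dots,T_k:K^m\to K^n$ be linear maps. Suppose that for every $l$ and every choice of distinct indices $i_1,\dots,i_l\in\{1,\dots,m\}$, the span of the vectors $\{T_j(e_{i_t}): 1\le t\le l,\ 1\le j\le k\}$ has dimension at least $l$. Then there exists a function $\phi:\{1,\dots,m\}\to\{1,\dots,k\}$ such that the vectors $T_{\phi(1)}(e_1),T_{\phi(2)}(e_2),\dots,T_{\phi(m)}(e_m)$ are linearly independent. *)

theory Defs
  imports "HOL-Analysis.Analysis"
begin

end

theory Submission
  imports Defs
begin

lemma submod:
  fixes X Y :: "('a::field ^ 'n::finite) set"
  shows "vec.dim (X \<union> Y) + vec.dim (vec.span X \<inter> vec.span Y) = vec.dim X + vec.dim Y"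
proof -
  have "{x + y |x y. x \<in> vec.span X \<and> y \<in> vec.span Y} = vec.span (X \<union> Y)"
    by (auto simp: vec.span_Un)
  then show ?thesis
    using vec.dim_sums_Int[OF vec.subspace_span vec.subspace_span, of X Y] by simp
qed

definition VV :: "('m \<Rightarrow> nat \<Rightarrow> 'v) \<Rightarrow> ('m \<Rightarrow> nat set) \<Rightarrow> 'm set \<Rightarrow> 'v set" where
  "VV v C S = {v i j | i j. i \<in> S \<and> j \<in> C i}"

lemma key_step:
  fixes v :: "'m::finite \<Rightarrow> nat \<Rightarrow> 'a::field ^ 'n::finite"
  assumes hall: "\<And>S. vec.dim (VV v C S) \<ge> card S"
    and x: "x1 \<in> C i0" "x2 \<in> C i0" "x1 \<noteq> x2"
    and S1: "vec.dim (VV v (C(i0 := C i0 - {x1})) S1) < card S1"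
    and S2: "vec.dim (VV v (C(i0 := C i0 - {x2})) S2) < card S2"
  shows False
proof -
  define C1 where "C1 = C(i0 := C i0 - {x1})"
  define C2 where "C2 = C(i0 := C i0 - {x2})"
  have i1: "i0 \<in> S1"
  proof (rule ccontr)
    assume "i0 \<notin> S1"
    then have "VV v C1 S1 = VV v C S1" unfolding VV_def C1_def by force
    then show False using hall[of S1] S1 C1_def by simp
  qed
  have i2: "i0 \<in> S2"
  proof (rule ccontr)
    assume "i0 \<notin> S2"
    then have "VV v C2 S2 = VV v C S2" unfolding VV_def C2_def by force
    then show False using hall[of S2] S2 C2_def by simp
  qed
  have sub1: "VV v C (S1 \<union> S2) \<subseteq> VV v C1 S1 \<union> VV v C2 S2"
  proof
    fix w assume "w \<in> VV v C (S1 \<union> S2)"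
    then obtain i j where w: "w = v i j" "i \<in> S1 \<union> S2" "j \<in> C i" unfolding VV_def by blast
    show "w \<in> VV v C1 S1 \<union> VV v C2 S2"
    proof (cases "i = i0")
      case True
      show ?thesis
      proof (cases "j = x1")
        case True
        then have "w \<in> VV v C2 S2" unfolding VV_def C2_def using w x i2 \<open>i = i0\<close> by auto
        then show ?thesis by blast
      next
        case False
        then have "w \<in> VV v C1 S1" unfolding VV_def C1_def using w x i1 \<open>i = i0\<close> by auto
        then show ?thesis by blast
      qed
    next
      case False
      then show ?thesis unfolding VV_def C1_def C2_def using w by auto
    qed
  qed
  have sub2: "VV v C (S1 \<inter> S2 - {i0}) \<subseteq> vec.span (VV v C1 S1) \<inter> vec.span (VV v C2 S2)"
  proof -
    have "VV v C (S1 \<inter> S2 - {i0}) \<subseteq> VV v C1 S1 \<inter> VV v C2 S2"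
      unfolding VV_def C1_def C2_def by auto
    then show ?thesis using vec.span_superset by blast
  qed
  have d1: "vec.dim (VV v C (S1 \<union> S2)) \<le> vec.dim (VV v C1 S1 \<union> VV v C2 S2)"
    using vec.dim_subset[OF sub1] .
  have d2: "vec.dim (VV v C (S1 \<inter> S2 - {i0})) \<le> vec.dim (vec.span (VV v C1 S1) \<inter> vec.span (VV v C2 S2))"
    using vec.dim_subset[OF sub2] .
  have c1: "card S1 + card S2 = card (S1 \<union> S2) + card (S1 \<inter> S2)"
    by (rule card_Un_Int) auto
  have c2: "card (S1 \<inter> S2 - {i0}) = card (S1 \<inter> S2) - 1"
    using i1 i2 by simp
  have c3: "card (S1 \<inter> S2) \<ge> 1" using i1 i2
    by (metis IntI One_nat_def Suc_leI card_gt_0_iff empty_iff finite)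
  have S1': "vec.dim (VV v C1 S1) < card S1" using S1 C1_def by simp
  have S2': "vec.dim (VV v C2 S2) < card S2" using S2 C2_def by simp
  show False
    using submod[of "VV v C1 S1" "VV v C2 S2"] d1 d2 c1 c2 c3 hall[of "S1 \<union> S2"]
      hall[of "S1 \<inter> S2 - {i0}"] S1' S2' by linarith
qed

lemma rado_gen:
  fixes v :: "'m::finite \<Rightarrow> nat \<Rightarrow> 'a::field ^ 'n::finite"
  shows "(\<And>S. vec.dim (VV v C S) \<ge> card S) \<Longrightarrow> (\<And>i. finite (C i)) \<Longrightarrow>
    \<exists>\<phi>. (\<forall>i. \<phi> i \<in> C i) \<and> inj (\<lambda>i. v i (\<phi> i)) \<and> vec.independent (range (\<lambda>i. v i (\<phi> i)))"
proof (induction "\<Sum>i\<in>UNIV. card (C i)" arbitrary: C rule: less_induct)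
  case less
  have ne: "C i \<noteq> {}" for i
  proof
    assume "C i = {}"
    then have "VV v C {i} = {}" unfolding VV_def by auto
    then show False using less.prems(1)[of "{i}"] by simp
  qed
  show ?case
  proof (cases "\<exists>i0. card (C i0) \<ge> 2")
    case False
    have "\<forall>i. \<exists>a. C i = {a}"
    proof
      fix i
      have "card (C i) \<noteq> 0" using ne less.prems(2) by simp
      moreover have "card (C i) < 2" using False by (meson not_le)
      ultimately have "card (C i) = 1" by linarith
      then show "\<exists>a. C i = {a}" by (simp add: card_1_singleton_iff)
    qed
    then obtain \<phi> where phi: "\<And>i. C i = {\<phi> i}" by metis
    define f where "f = (\<lambda>i. v i (\<phi> i))"
    have VU: "VV v C UNIV = range f" unfolding VV_def f_def phi by auto
    have fin: "finite (range f)" by simp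
    have h: "vec.dim (range f) \<ge> CARD('m)" using less.prems(1)[of UNIV] VU by simp
    have "vec.dim (range f) \<le> card (range f)"
      using vec.dim_le_card[OF vec.span_superset fin] .
    moreover have "card (range f) \<le> CARD('m)" by (rule card_image_le) simp
    ultimately have eq: "card (range f) = CARD('m)" "card (range f) \<le> vec.dim (range f)" using h by linarith+
    have "inj f" using eq(1) by (simp add: eq_card_imp_inj_on)
    moreover have "vec.independent (range f)"
      using vec.card_le_dim_spanning[of "range f" "range f"] fin eq(2) vec.span_superset by blast
    ultimately show ?thesis using phi f_def by auto
  next
    case True
    then obtain i0 where i0: "card (C i0) \<ge> 2" by blast
    then obtain x1 x2 where x: "x1 \<in> C i0" "x2 \<in> C i0" "x1 \<noteq> x2"
    proof -
      obtain B where "B \<subseteq> C i0" "card B = 2" using i0 obtain_subset_with_card_n by metis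
      then show ?thesis using that by (auto simp: card_2_iff)
    qed
    have "\<exists>x\<in>C i0. \<forall>S. vec.dim (VV v (C(i0 := C i0 - {x})) S) \<ge> card S"
      using key_step[OF less.prems(1) x] x by (metis not_le)
    then obtain x where xC: "x \<in> C i0" and hall': "\<And>S. vec.dim (VV v (C(i0 := C i0 - {x})) S) \<ge> card S"
      by blast
    define C' where "C' = C(i0 := C i0 - {x})"
    have lt: "(\<Sum>i\<in>UNIV. card (C' i)) < (\<Sum>i\<in>UNIV. card (C i))"
    proof (rule sum_strict_mono_ex1)
      show "\<forall>i\<in>UNIV. card (C' i) \<le> card (C i)"
        unfolding C'_def using less.prems(2) by (simp add: card_mono)
      show "\<exists>a\<in>UNIV. card (C' a) < card (C a)"
        unfolding C'_def using less.prems(2) xC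
        by (metis UNIV_I card_Diff1_less fun_upd_same)
    qed simp
    have fin': "\<And>i. finite (C' i)" unfolding C'_def using less.prems(2) by simp
    obtain \<phi> where "\<forall>i. \<phi> i \<in> C' i" "inj (\<lambda>i. v i (\<phi> i))" "vec.independent (range (\<lambda>i. v i (\<phi> i)))"
      using less.hyps[OF lt, of] hall' fin' C'_def by blast
    moreover have "C' i \<subseteq> C i" for i unfolding C'_def by auto
    ultimately show ?thesis by blast
  qed
qed

theorem lemma5:
  fixes e :: "'m::finite \<Rightarrow> 'a::field ^ 'm"
    and T :: "nat \<Rightarrow> 'a ^ 'm \<Rightarrow> 'a ^ 'n::finite"
    and k :: nat
  assumes e_inj: "inj e"
    and e_indep: "vec.independent (range e)"
    and e_span: "vec.span (range e) = UNIV"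
    and T_lin: "\<And>j. j \<in> {1..k} \<Longrightarrow> Vector_Spaces.linear (*s) (*s) (T j)"
    and hall: "\<And>S :: 'm set.
      vec.dim (vec.span {T j (e i) | i j. i \<in> S \<and> j \<in> {1..k}}) \<ge> card S"
  shows "\<exists>\<phi> :: 'm \<Rightarrow> nat. (\<forall>i. \<phi> i \<in> {1..k}) \<and>
           inj (\<lambda>i. T (\<phi> i) (e i)) \<and>
           vec.independent (range (\<lambda>i. T (\<phi> i) (e i)))"
proof -
  have "\<And>S. vec.dim (VV (\<lambda>i j. T j (e i)) (\<lambda>_. {1..k}) S) \<ge> card S"
    unfolding VV_def using hall by simp
  from rado_gen[of "\<lambda>i j. T j (e i)" "\<lambda>_. {1..k}", OF this] show ?thesis by simp
qed

end
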